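(* Let $\xi\in\mathbb{R}\setminus\{0\}$. (i) If either $|B|\ge|B|_c$, or $|B|<|B|_c$ and $|\xi|\le|\xi|^B_{vc}$, then $\alpha(s)\ge0$ for every $s\ge0$. (ii) If $|B|<|B|_c$ and $|\xi|>|\xi|^B_{vc}$, then there exists $s_0>0$ depending on $\rho_\pm,\mu_\pm,g,|B|,|\xi|$ such that $\alpha(s)<0$ for all $0<s\le s_0$.
   Context: $g>0$, $\rho_+>\rho_->0$, $[\rho]=\rho_+-\rho_-$, $\mu_\pm>0$, $B\ne0$; $\rho,\mu$ equal $\rho_+,\mu_+$ on $(0,1)$ and $\rho_-,\mu_-$ on $(-1,0)$. For $s\ge0$ and $\psi\in H_0^2((-1,1))$: $E_s(\psi)=\frac12\int_{-1}^1\big[s\mu(4\xi^2|\psi'|^2+|\xi^2\psi+\psi''|^2)+|B|^2(\xi^2|\psi'|^2+|\psi''|^2)\big]dx_2-\frac12\xi^2g[\rho]\psi(0)^2$, $J(\psi)=\frac12\int_{-1}^1\rho(\xi^2|\psi|^2+|\psi'|^2)dx_2$, $\alpha(s)=\inf\{E_s(\psi):\psi\in H_0^2((-1,1)),J(\psi)=1\}$. $|B|_c^2:=\sup\{g[\rho]\psi(0)^2/\int_{-1}^1|\psi'|^2: 0\ne\psi\in H_0^1((-1,1))\}$; for $|B|<|B|_c$, $(|\xi|^B_{vc})^2:=\inf\{|B|^2\int|\psi''|^2/(g[\rho]\psi(0)^2-|B|^2\int|\psi'|^2):\psi\in H_0^2((-1,1)),\ g[\rho]\psi(0)^2-|B|^2\int|\psi'|^2>0\}$.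 *)

theory Defs
  imports "HOL-Analysis.Analysis"
begin

text \<open>Piecewise constant density / viscosity: upper fluid on (0,1), lower fluid on (-1,0).
  The value at the single point 0 is irrelevant for all integrals.\<close>
definition pw :: "real \<Rightarrow> real \<Rightarrow> real \<Rightarrow> real" where
  "pw vp vm x = (if x > 0 then vp else vm)"

text \<open>One-dimensional Sobolev spaces on (-1,1), via the standard characterisation:
  psi is in H_0^1((-1,1)) with weak derivative d iff d is in L^2(-1,1),
  psi(x) = psi(-1) + int_{-1}^x d on [-1,1], and psi(-1) = psi(1) = 0.\<close>
definition H01 :: "(real \<Rightarrow> real) \<Rightarrow> (real \<Rightarrow> real) \<Rightarrow> bool" where
  "H01 psi d \<longleftrightarrow>
     d \<in> borel_measurable lborel \<and>
     set_integrable lborel {-1..1} d \<and>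
     set_integrable lborel {-1..1} (\<lambda>x. (d x)\<^sup>2) \<and>
     psi (-1) = 0 \<and> psi 1 = 0 \<and>
     (\<forall>x\<in>{-1..1}. psi x = psi (-1) + (LINT t:{-1..x}|lborel. d t))"

definition H02 :: "(real \<Rightarrow> real) \<Rightarrow> (real \<Rightarrow> real) \<Rightarrow> (real \<Rightarrow> real) \<Rightarrow> bool" where
  "H02 psi d1 d2 \<longleftrightarrow> H01 psi d1 \<and> H01 d1 d2"

definition Efun :: "real \<Rightarrow> real \<Rightarrow> real \<Rightarrow> real \<Rightarrow> real \<Rightarrow> real \<Rightarrow> real \<Rightarrow> real
    \<Rightarrow> (real \<Rightarrow> real) \<Rightarrow> (real \<Rightarrow> real) \<Rightarrow> (real \<Rightarrow> real) \<Rightarrow> real" where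
  "Efun g rp rm mp mm b xi s psi d1 d2 =
     (1/2) * (LINT x:{-1..1}|lborel.
        s * pw mp mm x * (4 * xi\<^sup>2 * (d1 x)\<^sup>2 + (xi\<^sup>2 * psi x + d2 x)\<^sup>2)
        + b\<^sup>2 * (xi\<^sup>2 * (d1 x)\<^sup>2 + (d2 x)\<^sup>2))
     - (1/2) * xi\<^sup>2 * g * (rp - rm) * (psi 0)\<^sup>2"

definition Jfun :: "real \<Rightarrow> real \<Rightarrow> real \<Rightarrow> (real \<Rightarrow> real) \<Rightarrow> (real \<Rightarrow> real) \<Rightarrow> real" where
  "Jfun rp rm xi psi d1 =
     (1/2) * (LINT x:{-1..1}|lborel. pw rp rm x * (xi\<^sup>2 * (psi x)\<^sup>2 + (d1 x)\<^sup>2))"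

text \<open>alpha(s), as an extended real infimum (so no boundedness issue arises).\<close>
definition alpha :: "real \<Rightarrow> real \<Rightarrow> real \<Rightarrow> real \<Rightarrow> real \<Rightarrow> real \<Rightarrow> real \<Rightarrow> real \<Rightarrow> ereal" where
  "alpha g rp rm mp mm b xi s =
     Inf {ereal (Efun g rp rm mp mm b xi s psi d1 d2) | psi d1 d2.
            H02 psi d1 d2 \<and> Jfun rp rm xi psi d1 = 1}"

definition Bc2 :: "real \<Rightarrow> real \<Rightarrow> real \<Rightarrow> ereal" where
  "Bc2 g rp rm =
     Sup {ereal (g * (rp - rm) * (psi 0)\<^sup>2 / (LINT x:{-1..1}|lborel. (d x)\<^sup>2)) | psi d.
            H01 psi d \<and> (\<exists>x\<in>{-1..1}. psi x \<noteq> 0)}"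

definition xivc2 :: "real \<Rightarrow> real \<Rightarrow> real \<Rightarrow> real \<Rightarrow> ereal" where
  "xivc2 g rp rm b =
     Inf {ereal (b\<^sup>2 * (LINT x:{-1..1}|lborel. (d2 x)\<^sup>2)
                 / (g * (rp - rm) * (psi 0)\<^sup>2 - b\<^sup>2 * (LINT x:{-1..1}|lborel. (d1 x)\<^sup>2))) | psi d1 d2.
            H02 psi d1 d2 \<and> g * (rp - rm) * (psi 0)\<^sup>2 - b\<^sup>2 * (LINT x:{-1..1}|lborel. (d1 x)\<^sup>2) > 0}"

end

theory Submission
  imports Defs
begin


lemma pw_meas[measurable]: "(\<lambda>x. pw a b x) \<in> borel_measurable lborel"
  unfolding pw_def by measurable

lemma pw_bound: "\<bar>pw a b x\<bar> \<le> \<bar>a\<bar> + \<bar>b\<bar>" by (simp add: pw_def)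

lemma si_pw:
  assumes "set_integrable lborel {-1..1::real} f" "f \<in> borel_measurable lborel"
  shows "set_integrable lborel {-1..1} (\<lambda>x. pw a b x * f x)"
proof (rule set_integrable_bound[where f="\<lambda>x. (\<bar>a\<bar> + \<bar>b\<bar>) * f x"])
  show "set_integrable lborel {-1..1} (\<lambda>x. (\<bar>a\<bar> + \<bar>b\<bar>) * f x)" using assms by simp
  show "set_borel_measurable lborel {-1..1} (\<lambda>x. pw a b x * f x)"
    unfolding set_borel_measurable_def using assms(2) by measurable
  show "AE x in lborel. x \<in> {-1..1} \<longrightarrow> norm (pw a b x * f x) \<le> norm ((\<bar>a\<bar> + \<bar>b\<bar>) * f x)"
    by (auto simp: abs_mult intro!: mult_right_mono pw_bound)
qed

lemma H01_cont:
  assumes "H01 psi d" shows "continuous_on {-1..1} psi"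
proof -
  have si: "set_integrable lborel {-1..1} d" and eq: "\<forall>x\<in>{-1..1}. psi x = psi (-1) + (LINT t:{-1..x}|lborel. d t)"
    using assms unfolding H01_def by auto
  have int: "d integrable_on {-1..1}" using set_borel_integral_eq_integral(1)[OF si] .
  have "psi x = psi (-1) + integral {-1..x} d" if "x \<in> {-1..1}" for x
  proof -
    have "set_integrable lborel {-1..x} d"
      by (rule set_integrable_subset[OF si]) (use that in auto)
    then show ?thesis using eq that set_borel_integral_eq_integral(2) by metis
  qed
  moreover have "continuous_on {-1..1} (\<lambda>x. psi (-1) + integral {-1..x} d)"
    by (intro continuous_intros indefinite_integral_continuous_1 int)
  ultimately show ?thesis using continuous_on_eq by (metis (no_types, lifting))
qed

lemma H01_zero:
  assumes "H01 psi d" "(LINT x:{-1..1}|lborel. (d x)\<^sup>2) = 0"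
  shows "psi 0 = 0"
proof -
  have si: "set_integrable lborel {-1..1::real} (\<lambda>x. (d x)\<^sup>2)" and eq: "\<forall>x\<in>{-1..1}. psi x = psi (-1) + (LINT t:{-1..x}|lborel. d t)"
    and z: "psi (-1) = 0"
    using assms unfolding H01_def by auto
  have "AE x in lborel. indicator {-1..1::real} x *\<^sub>R (d x)\<^sup>2 = 0"
    using integral_nonneg_eq_0_iff_AE[of lborel "\<lambda>x. indicator {-1..1::real} x *\<^sub>R (d x)\<^sup>2"] si assms(2)
    unfolding set_integrable_def set_lebesgue_integral_def by auto
  then have "AE x in lborel. indicator {-1..0::real} x *\<^sub>R d x = 0"
    by eventually_elim (auto simp: indicator_def split: if_splits)
  then have "(LINT t:{-1..0}|lborel. d t) = 0"
    unfolding set_lebesgue_integral_def by (rule integral_eq_zero_AE)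
  then show ?thesis using eq z by auto
qed

lemma clamp_ext:
  assumes "continuous_on {-1..1} psi"
  shows "continuous_on UNIV (\<lambda>x::real. psi (max (-1) (min 1 x)))"
  by (rule continuous_on_compose2[OF assms]) (auto intro!: continuous_intros)

lemma abs_prod_le: "\<bar>a * b\<bar> \<le> a\<^sup>2 + (b::real)\<^sup>2"
proof -
  have sa: "\<bar>a\<bar> * \<bar>a\<bar> = a\<^sup>2" "\<bar>b\<bar> * \<bar>b\<bar> = b\<^sup>2" by (simp_all add: power2_eq_square)
  have "\<bar>a\<bar> * \<bar>b\<bar> \<le> \<bar>a\<bar> * \<bar>a\<bar> + \<bar>b\<bar> * \<bar>b\<bar>"
  proof (cases "\<bar>a\<bar> \<le> \<bar>b\<bar>")
    case True
    have "\<bar>a\<bar> * \<bar>b\<bar> \<le> \<bar>b\<bar> * \<bar>b\<bar>" using True by (intro mult_right_mono) auto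
    moreover have "0 \<le> \<bar>a\<bar> * \<bar>a\<bar>" by simp
    ultimately show ?thesis by linarith
  next
    case False
    have "\<bar>a\<bar> * \<bar>b\<bar> \<le> \<bar>a\<bar> * \<bar>a\<bar>" using False by (intro mult_left_mono) auto
    moreover have "0 \<le> \<bar>b\<bar> * \<bar>b\<bar>" by simp
    ultimately show ?thesis by linarith
  qed
  then show ?thesis using sa by (simp add: abs_mult)
qed



lemma wlog_cont:
  assumes "H02 psi d1 d2"
  obtains psc where "continuous_on UNIV psc" "H02 psc d1 d2" "psc 0 = psi 0"
    "\<And>g rp rm mp mm b xi s. Efun g rp rm mp mm b xi s psc d1 d2 = Efun g rp rm mp mm b xi s psi d1 d2"
    "\<And>rp rm xi. Jfun rp rm xi psc d1 = Jfun rp rm xi psi d1"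
proof -
  define psc where "psc = (\<lambda>x::real. psi (max (-1) (min 1 x)))"
  have H: "H01 psi d1" "H01 d1 d2" using assms unfolding H02_def by auto
  have c: "continuous_on UNIV psc" unfolding psc_def by (rule clamp_ext[OF H01_cont[OF H(1)]])
  have on: "psc x = psi x" if "x \<in> {-1..1}" for x using that unfolding psc_def by auto
  have on1: "psc (-1) = psi (-1)" "psc 1 = psi 1" "psc 0 = psi 0" using on by auto
  have "H01 psc d1"
    unfolding H01_def
  proof (intro conjI)
    show "d1 \<in> borel_measurable lborel" "set_integrable lborel {- 1..1} d1"
         "set_integrable lborel {- 1..1} (\<lambda>x. (d1 x)\<^sup>2)" "psc (- 1) = 0" "psc 1 = 0"
      using H(1) on1 unfolding H01_def by auto
    show "\<forall>x\<in>{- 1..1}. psc x = psc (- 1) + set_lebesgue_integral lborel {- 1..x} d1"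
    proof
      fix x :: real assume "x \<in> {-1..1}"
      then show "psc x = psc (- 1) + set_lebesgue_integral lborel {- 1..x} d1"
        using H(1) on[of x] on1 unfolding H01_def by auto
    qed
  qed
  then have "H02 psc d1 d2" using H(2) unfolding H02_def by auto
  moreover have "Efun g rp rm mp mm b xi s psc d1 d2 = Efun g rp rm mp mm b xi s psi d1 d2" for g rp rm mp mm b xi s
  proof -
    have "(LINT x:{-1..1}|lborel.
        s * pw mp mm x * (4 * xi\<^sup>2 * (d1 x)\<^sup>2 + (xi\<^sup>2 * psc x + d2 x)\<^sup>2)
        + b\<^sup>2 * (xi\<^sup>2 * (d1 x)\<^sup>2 + (d2 x)\<^sup>2)) = (LINT x:{-1..1}|lborel.
        s * pw mp mm x * (4 * xi\<^sup>2 * (d1 x)\<^sup>2 + (xi\<^sup>2 * psi x + d2 x)\<^sup>2)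
        + b\<^sup>2 * (xi\<^sup>2 * (d1 x)\<^sup>2 + (d2 x)\<^sup>2))"
      by (rule set_lebesgue_integral_cong) (simp_all add: on)
    then show ?thesis unfolding Efun_def on1 by simp
  qed
  moreover have "Jfun rp rm xi psc d1 = Jfun rp rm xi psi d1" for rp rm xi
  proof -
    have "(LINT x:{-1..1}|lborel. pw rp rm x * (xi\<^sup>2 * (psc x)\<^sup>2 + (d1 x)\<^sup>2))
       = (LINT x:{-1..1}|lborel. pw rp rm x * (xi\<^sup>2 * (psi x)\<^sup>2 + (d1 x)\<^sup>2))"
      by (rule set_lebesgue_integral_cong) (simp_all add: on)
    then show ?thesis unfolding Jfun_def by simp
  qed
  ultimately show ?thesis using that c on1 by blast
qed



lemma ints:
  assumes "H02 psi d1 d2" "continuous_on UNIV psi"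
  shows "set_integrable lborel {-1..1} (\<lambda>x. pw a b x * (4*xi\<^sup>2*(d1 x)\<^sup>2 + (xi\<^sup>2*psi x + d2 x)\<^sup>2))"
    and "set_integrable lborel {-1..1} (\<lambda>x. pw a b x * (xi\<^sup>2*(psi x)\<^sup>2 + (d1 x)\<^sup>2))"
    and "set_integrable lborel {-1..1} (\<lambda>x. (d1 x)\<^sup>2)"
    and "set_integrable lborel {-1..1} (\<lambda>x. (d2 x)\<^sup>2)"
proof -
  have m1[measurable]: "d1 \<in> borel_measurable lborel" and m2[measurable]: "d2 \<in> borel_measurable lborel"
    and i1: "set_integrable lborel {-1..1} (\<lambda>x. (d1 x)\<^sup>2)"
    and i2: "set_integrable lborel {-1..1} (\<lambda>x. (d2 x)\<^sup>2)"
    using assms(1) unfolding H02_def H01_def by auto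
  have mp[measurable]: "psi \<in> borel_measurable lborel"
    using borel_measurable_continuous_onI[OF assms(2)] by simp
  have ip: "set_integrable lborel {-1..1} (\<lambda>x. (psi x)\<^sup>2)"
    by (rule borel_integrable_atLeastAtMost') (intro continuous_intros continuous_on_subset[OF assms(2)], auto)
  have ipd: "set_integrable lborel {-1..1} (\<lambda>x. psi x * d2 x)"
  proof (rule set_integrable_bound[where f="\<lambda>x. (psi x)\<^sup>2 + (d2 x)\<^sup>2"])
    show "set_integrable lborel {-1..1} (\<lambda>x. (psi x)\<^sup>2 + (d2 x)\<^sup>2)" using ip i2 by auto
    show "set_borel_measurable lborel {-1..1} (\<lambda>x. psi x * d2 x)"
      unfolding set_borel_measurable_def by measurable
    show "AE x in lborel. x \<in> {-1..1} \<longrightarrow> norm (psi x * d2 x) \<le> norm ((psi x)\<^sup>2 + (d2 x)\<^sup>2)"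
      using abs_prod_le by auto
  qed
  have eq: "(\<lambda>x. 4*xi\<^sup>2*(d1 x)\<^sup>2 + (xi\<^sup>2*psi x + d2 x)\<^sup>2)
     = (\<lambda>x. 4*xi\<^sup>2*(d1 x)\<^sup>2 + (xi\<^sup>2*xi\<^sup>2)*(psi x)\<^sup>2 + (2*xi\<^sup>2)*(psi x * d2 x) + (d2 x)\<^sup>2)"
    by (rule ext) (simp add: power2_eq_square algebra_simps)
  have "set_integrable lborel {-1..1} (\<lambda>x. 4*xi\<^sup>2*(d1 x)\<^sup>2 + (xi\<^sup>2*psi x + d2 x)\<^sup>2)"
    unfolding eq using i1 i2 ip ipd by (intro set_integral_add set_integrable_mult_right) auto
  then show "set_integrable lborel {-1..1} (\<lambda>x. pw a b x * (4*xi\<^sup>2*(d1 x)\<^sup>2 + (xi\<^sup>2*psi x + d2 x)\<^sup>2))"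
    by (rule si_pw) measurable
  have "set_integrable lborel {-1..1} (\<lambda>x. xi\<^sup>2*(psi x)\<^sup>2 + (d1 x)\<^sup>2)"
    using i1 ip by (intro set_integral_add set_integrable_mult_right) auto
  then show "set_integrable lborel {-1..1} (\<lambda>x. pw a b x * (xi\<^sup>2*(psi x)\<^sup>2 + (d1 x)\<^sup>2))"
    by (rule si_pw) measurable
  show "set_integrable lborel {-1..1} (\<lambda>x. (d1 x)\<^sup>2)" "set_integrable lborel {-1..1} (\<lambda>x. (d2 x)\<^sup>2)"
    using i1 i2 .
qed



lemma set_int_nonneg: assumes "\<And>x. x \<in> A \<Longrightarrow> 0 \<le> f x" shows "0 \<le> (LINT x:A|M. (f x::real))"
  unfolding set_lebesgue_integral_def by (intro integral_nonneg_AE AE_I2) (use assms in \<open>auto simp: indicator_def\<close>)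

lemma alg1: "(1/2) * (c\<^sup>2*L) - (1/2)*xi\<^sup>2*g*(rp-rm)*(c*p)\<^sup>2 = c\<^sup>2*((1/2)*L - (1/2)*xi\<^sup>2*g*(rp-rm)*p\<^sup>2)" for c L xi g rp rm p :: real
  by algebra

lemma alg2: "(1/2)*(s*V + (B1 + B2)) - (1/2)*xi\<^sup>2*g*(rp-rm)*p\<^sup>2 = (1/2)*(s*V + (B1 + B2 - xi\<^sup>2*g*(rp-rm)*p\<^sup>2))" for s V B1 B2 xi g rp rm p :: real
  by algebra

lemma alg3: "(1/2) * (c\<^sup>2*L) = c\<^sup>2*((1/2)*L)" for c L :: real
  by algebra

lemma alg4: "s*w*(4*xi\<^sup>2*(c*a)\<^sup>2 + (xi\<^sup>2*(c*p) + c*e)\<^sup>2) + b\<^sup>2*(xi\<^sup>2*(c*a)\<^sup>2 + (c*e)\<^sup>2)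
  = c\<^sup>2*(s*w*(4*xi\<^sup>2*a\<^sup>2 + (xi\<^sup>2*p+e)\<^sup>2) + b\<^sup>2*(xi\<^sup>2*a\<^sup>2 + e\<^sup>2))" for s w xi c a p e b :: real
  by algebra

lemma alg5: "w * (xi\<^sup>2 * (c * p)\<^sup>2 + (c * a)\<^sup>2) = c\<^sup>2 * (w * (xi\<^sup>2 * p\<^sup>2 + a\<^sup>2))" for w xi c p a :: real
  by algebra

lemma Efun_split:
  assumes "H02 psi d1 d2" "continuous_on UNIV psi"
  shows "Efun g rp rm mp mm b xi s psi d1 d2 =
     (1/2) * (s * (LINT x:{-1..1}|lborel. pw mp mm x * (4*xi\<^sup>2*(d1 x)\<^sup>2 + (xi\<^sup>2*psi x + d2 x)\<^sup>2))
      + (b\<^sup>2*xi\<^sup>2*(LINT x:{-1..1}|lborel. (d1 x)\<^sup>2) + b\<^sup>2*(LINT x:{-1..1}|lborel. (d2 x)\<^sup>2)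
         - xi\<^sup>2 * g * (rp - rm) * (psi 0)\<^sup>2))"
proof -
  note I = ints(1)[OF assms, where a=mp and b=mm and xi=xi] ints(3,4)[OF assms]
  have "(LINT x:{-1..1}|lborel. s * pw mp mm x * (4 * xi\<^sup>2 * (d1 x)\<^sup>2 + (xi\<^sup>2 * psi x + d2 x)\<^sup>2)
        + b\<^sup>2 * (xi\<^sup>2 * (d1 x)\<^sup>2 + (d2 x)\<^sup>2))
     = (LINT x:{-1..1}|lborel. s * (pw mp mm x * (4 * xi\<^sup>2 * (d1 x)\<^sup>2 + (xi\<^sup>2 * psi x + d2 x)\<^sup>2))
        + ((b\<^sup>2 * xi\<^sup>2) * (d1 x)\<^sup>2 + b\<^sup>2 * (d2 x)\<^sup>2))"
    by (simp add: algebra_simps)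
  also have "\<dots> = s * (LINT x:{-1..1}|lborel. pw mp mm x * (4*xi\<^sup>2*(d1 x)\<^sup>2 + (xi\<^sup>2*psi x + d2 x)\<^sup>2))
      + (b\<^sup>2*xi\<^sup>2*(LINT x:{-1..1}|lborel. (d1 x)\<^sup>2) + b\<^sup>2*(LINT x:{-1..1}|lborel. (d2 x)\<^sup>2))"
    using I by (simp add: set_integral_add)
  finally have E: "(LINT x:{-1..1}|lborel. s * pw mp mm x * (4 * xi\<^sup>2 * (d1 x)\<^sup>2 + (xi\<^sup>2 * psi x + d2 x)\<^sup>2)
        + b\<^sup>2 * (xi\<^sup>2 * (d1 x)\<^sup>2 + (d2 x)\<^sup>2)) = s * (LINT x:{-1..1}|lborel. pw mp mm x * (4*xi\<^sup>2*(d1 x)\<^sup>2 + (xi\<^sup>2*psi x + d2 x)\<^sup>2))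
      + (b\<^sup>2*xi\<^sup>2*(LINT x:{-1..1}|lborel. (d1 x)\<^sup>2) + b\<^sup>2*(LINT x:{-1..1}|lborel. (d2 x)\<^sup>2))" .
  show ?thesis unfolding Efun_def E by (rule alg2)
qed

lemma H01_scale:
  assumes "H01 psi d" shows "H01 (\<lambda>x. c * psi x) (\<lambda>x. c * d x)"
proof -
  have a: "d \<in> borel_measurable lborel" "set_integrable lborel {-1..1} d" "set_integrable lborel {-1..1} (\<lambda>x. (d x)\<^sup>2)"
    "psi (-1) = 0" "psi 1 = 0" "\<forall>x\<in>{-1..1}. psi x = psi (-1) + (LINT t:{-1..x}|lborel. d t)"
    using assms unfolding H01_def by auto
  have sq: "(\<lambda>x. (c * d x)\<^sup>2) = (\<lambda>x. c\<^sup>2 * (d x)\<^sup>2)" by (simp add: power_mult_distrib)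
  show ?thesis unfolding H01_def sq
  proof (intro conjI)
    show "(\<lambda>x. c * d x) \<in> borel_measurable lborel" using a(1) by measurable
    show "set_integrable lborel {-1..1} (\<lambda>x. c * d x)" using a(2) by (rule set_integrable_mult_right)
    show "set_integrable lborel {-1..1} (\<lambda>x. c\<^sup>2 * (d x)\<^sup>2)" using a(3) by (rule set_integrable_mult_right)
    show "c * psi (- 1) = 0" "c * psi 1 = 0" using a(4,5) by auto
    show "\<forall>x\<in>{- 1..1}. c * psi x = c * psi (- 1) + (LINT t:{-1..x}|lborel. c * d t)"
    proof
      fix x :: real assume "x \<in> {-1..1}"
      then have "psi x = psi (-1) + (LINT t:{-1..x}|lborel. d t)" using a(6) by blast
      then show "c * psi x = c * psi (- 1) + (LINT t:{-1..x}|lborel. c * d t)"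
        by (simp only: set_integral_mult_right distrib_left)
    qed
  qed
qed

lemma Efun_scale:
  "Efun g rp rm mp mm b xi s (\<lambda>x. c * psi x) (\<lambda>x. c * d1 x) (\<lambda>x. c * d2 x)
   = c\<^sup>2 * Efun g rp rm mp mm b xi s psi d1 d2"
proof -
  have "(\<lambda>x. s * pw mp mm x * (4 * xi\<^sup>2 * (c * d1 x)\<^sup>2 + (xi\<^sup>2 * (c * psi x) + c * d2 x)\<^sup>2)
        + b\<^sup>2 * (xi\<^sup>2 * (c * d1 x)\<^sup>2 + (c * d2 x)\<^sup>2))
     = (\<lambda>x. c\<^sup>2 * (s * pw mp mm x * (4 * xi\<^sup>2 * (d1 x)\<^sup>2 + (xi\<^sup>2 * psi x + d2 x)\<^sup>2)
        + b\<^sup>2 * (xi\<^sup>2 * (d1 x)\<^sup>2 + (d2 x)\<^sup>2)))"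
    by (rule ext) (rule alg4)
  note eq = this
  show ?thesis unfolding Efun_def eq set_integral_mult_right by (rule alg1)
qed

lemma Jfun_scale:
  "Jfun rp rm xi (\<lambda>x. c * psi x) (\<lambda>x. c * d1 x) = c\<^sup>2 * Jfun rp rm xi psi d1"
proof -
  have "(\<lambda>x. pw rp rm x * (xi\<^sup>2 * (c * psi x)\<^sup>2 + (c * d1 x)\<^sup>2))
     = (\<lambda>x. c\<^sup>2 * (pw rp rm x * (xi\<^sup>2 * (psi x)\<^sup>2 + (d1 x)\<^sup>2)))"
    by (rule ext) (rule alg5)
  note eq = this
  show ?thesis unfolding Jfun_def eq set_integral_mult_right by (rule alg3)
qed



lemma pw_pos: "0 < a \<Longrightarrow> 0 < b \<Longrightarrow> 0 < pw a b x" by (simp add: pw_def)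

lemma V_nonneg: "mp > 0 \<Longrightarrow> mm > 0 \<Longrightarrow>
  0 \<le> (LINT x:{-1..1}|lborel. pw mp mm x * (4*xi\<^sup>2*(d1 x)\<^sup>2 + (xi\<^sup>2*psi x + d2 x)\<^sup>2))"
  by (rule set_int_nonneg) (intro mult_nonneg_nonneg less_imp_le[OF pw_pos]; simp)

lemma sq_nonneg_int: fixes d :: "real \<Rightarrow> real" shows "0 \<le> (LINT x:{-1..1}|lborel. (d x)\<^sup>2)"
  by (rule set_int_nonneg) simp

lemma part1:
  fixes g rp rm mp mm b xi s :: real
  assumes H: "H02 psi d1 d2" and s: "s \<ge> 0" and g: "g > 0" and r: "rp > rm" "rm > 0" and m: "mp > 0" "mm > 0"
    and hyp: "ereal (b\<^sup>2) \<ge> Bc2 g rp rm \<or> (ereal (b\<^sup>2) < Bc2 g rp rm \<and> ereal (xi\<^sup>2) \<le> xivc2 g rp rm b)"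
  shows "0 \<le> Efun g rp rm mp mm b xi s psi d1 d2"
proof -
  obtain psc where c: "continuous_on UNIV psc" and H': "H02 psc d1 d2" and p0: "psc 0 = psi 0"
    and E: "\<And>g rp rm mp mm b xi s. Efun g rp rm mp mm b xi s psc d1 d2 = Efun g rp rm mp mm b xi s psi d1 d2"
    and J: "\<And>rp rm xi. Jfun rp rm xi psc d1 = Jfun rp rm xi psi d1"
    using wlog_cont[OF H] by blast
  have H1: "H01 psc d1" using H' unfolding H02_def by auto
  define I1 where "I1 = (LINT x:{-1..1}|lborel. (d1 x)\<^sup>2)"
  define I2 where "I2 = (LINT x:{-1..1}|lborel. (d2 x)\<^sup>2)"
  define V where "V = (LINT x:{-1..1}|lborel. pw mp mm x * (4*xi\<^sup>2*(d1 x)\<^sup>2 + (xi\<^sup>2*psc x + d2 x)\<^sup>2))"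
  define M where "M = b\<^sup>2*xi\<^sup>2*I1 + b\<^sup>2*I2 - xi\<^sup>2 * g * (rp - rm) * (psc 0)\<^sup>2"
  define D where "D = g * (rp - rm) * (psc 0)\<^sup>2 - b\<^sup>2 * I1"
  have split: "Efun g rp rm mp mm b xi s psc d1 d2 = (1/2) * (s * V + M)"
    using Efun_split[OF H' c] unfolding M_def V_def I1_def I2_def by simp
  have V0: "V \<ge> 0" unfolding V_def using m by (rule V_nonneg)
  have I10: "I1 \<ge> 0" and I20: "I2 \<ge> 0" unfolding I1_def I2_def by (rule sq_nonneg_int)+
  have MD: "M = b\<^sup>2 * I2 - xi\<^sup>2 * D" unfolding M_def D_def by (simp add: algebra_simps)
  have key: "0 \<le> M"
  proof (cases "D > 0")
    case False
    have "xi\<^sup>2 * D \<le> 0" using False by (simp add: mult_nonneg_nonpos)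
    moreover have "0 \<le> b\<^sup>2 * I2" using I20 by simp
    ultimately show ?thesis unfolding MD by linarith
  next
    case True
    from hyp consider (a) "Bc2 g rp rm \<le> ereal (b\<^sup>2)" | (b) "ereal (xi\<^sup>2) \<le> xivc2 g rp rm b" by fastforce
    then show ?thesis
    proof cases
      case a
      have "0 \<le> b\<^sup>2 * I1" using I10 by simp
      then have Ppos: "0 < g * (rp - rm) * (psc 0)\<^sup>2" using True unfolding D_def by linarith
      then have "psc 0 \<noteq> 0" by auto
      have "I1 \<noteq> 0"
      proof
        assume "I1 = 0"
        then have "psc 0 = 0" using H01_zero[OF H1] unfolding I1_def by blast
        with \<open>psc 0 \<noteq> 0\<close> show False by simp
      qed
      then have I1p: "I1 > 0" using I10 by simp
      have "ereal (g * (rp - rm) * (psc 0)\<^sup>2 / I1) \<le> Bc2 g rp rm"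
        unfolding Bc2_def I1_def
        by (rule Sup_upper) (use H1 \<open>psc 0 \<noteq> 0\<close> in force)
      then have "ereal (g * (rp - rm) * (psc 0)\<^sup>2 / I1) \<le> ereal (b\<^sup>2)" using a by (rule order_trans)
      then have "g * (rp - rm) * (psc 0)\<^sup>2 / I1 \<le> b\<^sup>2" by simp
      then have "g * (rp - rm) * (psc 0)\<^sup>2 \<le> b\<^sup>2 * I1" using I1p by (simp add: pos_divide_le_eq)
      with True show ?thesis unfolding D_def by linarith
    next
      case b
      have "xivc2 g rp rm b \<le> ereal (b\<^sup>2 * I2 / D)"
        unfolding xivc2_def I2_def
        by (rule Inf_lower) (use H' True in \<open>force simp: D_def I1_def\<close>)
      with b have "ereal (xi\<^sup>2) \<le> ereal (b\<^sup>2 * I2 / D)" by (rule order_trans)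
      then have "xi\<^sup>2 \<le> b\<^sup>2 * I2 / D" by simp
      then have "xi\<^sup>2 * D \<le> b\<^sup>2 * I2" using True by (simp add: pos_le_divide_eq)
      then show ?thesis unfolding MD by linarith
    qed
  qed
  have "0 \<le> s * V" using s V0 by simp
  then show ?thesis using key split E by (metis add_nonneg_nonneg mult_nonneg_nonneg zero_le_divide_iff zero_le_one zero_le_numeral le_divide_eq_1 order_refl)
qed



lemma part2:
  fixes g rp rm mp mm b xi :: real
  assumes g: "g > 0" and r: "rp > rm" "rm > 0" and m: "mp > 0" "mm > 0"
    and hyp: "xivc2 g rp rm b < ereal (xi\<^sup>2)"
  shows "\<exists>s0>0. \<forall>s. 0 < s \<and> s \<le> s0 \<longrightarrow> alpha g rp rm mp mm b xi s < 0"
proof -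
  from hyp obtain psi d1 d2 where H: "H02 psi d1 d2"
    and Dp: "g * (rp - rm) * (psi 0)\<^sup>2 - b\<^sup>2 * (LINT x:{-1..1}|lborel. (d1 x)\<^sup>2) > 0"
    and lt: "ereal (b\<^sup>2 * (LINT x:{-1..1}|lborel. (d2 x)\<^sup>2)
                 / (g * (rp - rm) * (psi 0)\<^sup>2 - b\<^sup>2 * (LINT x:{-1..1}|lborel. (d1 x)\<^sup>2))) < ereal (xi\<^sup>2)"
    unfolding xivc2_def Inf_less_iff by blast
  obtain psc where c: "continuous_on UNIV psc" and H': "H02 psc d1 d2" and p0: "psc 0 = psi 0"
    and E: "\<And>g rp rm mp mm b xi s. Efun g rp rm mp mm b xi s psc d1 d2 = Efun g rp rm mp mm b xi s psi d1 d2"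
    and J: "\<And>rp rm xi. Jfun rp rm xi psc d1 = Jfun rp rm xi psi d1"
    using wlog_cont[OF H] by blast
  have H1: "H01 psc d1" and H2: "H01 d1 d2" using H' unfolding H02_def by auto
  define I1 where "I1 = (LINT x:{-1..1}|lborel. (d1 x)\<^sup>2)"
  define I2 where "I2 = (LINT x:{-1..1}|lborel. (d2 x)\<^sup>2)"
  define V where "V = (LINT x:{-1..1}|lborel. pw mp mm x * (4*xi\<^sup>2*(d1 x)\<^sup>2 + (xi\<^sup>2*psc x + d2 x)\<^sup>2))"
  define M where "M = b\<^sup>2*xi\<^sup>2*I1 + b\<^sup>2*I2 - xi\<^sup>2 * g * (rp - rm) * (psc 0)\<^sup>2"
  define D where "D = g * (rp - rm) * (psc 0)\<^sup>2 - b\<^sup>2 * I1"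
  have split: "\<And>s. Efun g rp rm mp mm b xi s psc d1 d2 = (1/2) * (s * V + M)"
    using Efun_split[OF H' c] unfolding M_def V_def I1_def I2_def by simp
  have V0: "V \<ge> 0" unfolding V_def using m by (rule V_nonneg)
  have I10: "I1 \<ge> 0" and I20: "I2 \<ge> 0" unfolding I1_def I2_def by (rule sq_nonneg_int)+
  have MD: "M = b\<^sup>2 * I2 - xi\<^sup>2 * D" unfolding M_def D_def by (simp add: algebra_simps)
  have Dpos: "D > 0" using Dp unfolding D_def I1_def p0 .
  have "b\<^sup>2 * I2 / D < xi\<^sup>2" using lt unfolding D_def I1_def I2_def p0 by simp
  then have "b\<^sup>2 * I2 < xi\<^sup>2 * D" using Dpos by (simp add: pos_divide_less_eq)
  then have Mneg: "M < 0" unfolding MD by linarith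
  have "0 \<le> b\<^sup>2 * I1" using I10 by simp
  then have Ppos: "0 < g * (rp - rm) * (psc 0)\<^sup>2" using Dpos unfolding D_def by linarith
  then have "psc 0 \<noteq> 0" by auto
  have "I1 \<noteq> 0"
  proof
    assume "I1 = 0"
    then have "psc 0 = 0" using H01_zero[OF H1] unfolding I1_def by blast
    with \<open>psc 0 \<noteq> 0\<close> show False by simp
  qed
  then have I1p: "I1 > 0" using I10 by simp
  define JJ where "JJ = Jfun rp rm xi psc d1"
  have "(LINT x:{-1..1}|lborel. rm * (d1 x)\<^sup>2) \<le> (LINT x:{-1..1}|lborel. pw rp rm x * (xi\<^sup>2*(psc x)\<^sup>2 + (d1 x)\<^sup>2))"
  proof (rule set_integral_mono)
    show "set_integrable lborel {-1..1} (\<lambda>x. rm * (d1 x)\<^sup>2)"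
      using ints(3)[OF H' c] by (rule set_integrable_mult_right)
    show "set_integrable lborel {-1..1} (\<lambda>x. pw rp rm x * (xi\<^sup>2*(psc x)\<^sup>2 + (d1 x)\<^sup>2))"
      by (rule ints(2)[OF H' c])
    fix x :: real
    have pw: "rm \<le> pw rp rm x" using r by (simp add: pw_def)
    have "rm * (d1 x)\<^sup>2 \<le> pw rp rm x * (d1 x)\<^sup>2" using pw by (simp add: mult_right_mono)
    also have "\<dots> \<le> pw rp rm x * (xi\<^sup>2*(psc x)\<^sup>2 + (d1 x)\<^sup>2)"
      using pw r by (intro mult_left_mono) auto
    finally show "rm * (d1 x)\<^sup>2 \<le> pw rp rm x * (xi\<^sup>2*(psc x)\<^sup>2 + (d1 x)\<^sup>2)" .
  qed
  then have "rm * I1 \<le> 2 * JJ" unfolding I1_def JJ_def Jfun_def by simp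
  moreover have "0 < rm * I1" using r I1p by simp
  ultimately have JJp: "JJ > 0" by linarith
  define s0 where "s0 = - M / (2 * (V + 1))"
  have s0p: "s0 > 0" unfolding s0_def using Mneg V0 by (intro divide_pos_pos) auto
  have s0V: "s0 * V < - M"
  proof -
    have "s0 * V = (- M * V) / (2 * (V + 1))" unfolding s0_def by simp
    also have "\<dots> < - M"
    proof -
      have "- M * V < - M * (2 * (V + 1))" using Mneg V0 by (intro mult_strict_left_mono) auto
      moreover have pos: "0 < 2 * (V + 1)" using V0 by simp
      ultimately show ?thesis by (simp only: pos_divide_less_eq[OF pos])
    qed
    finally show ?thesis .
  qed
  define cc where "cc = 1 / sqrt JJ"
  have cc2: "cc\<^sup>2 = 1 / JJ" unfolding cc_def using JJp by (simp add: power_divide)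
  have cc2p: "cc\<^sup>2 > 0" using cc2 JJp by simp
  have Hs: "H02 (\<lambda>x. cc * psc x) (\<lambda>x. cc * d1 x) (\<lambda>x. cc * d2 x)"
    using H1 H2 unfolding H02_def by (auto intro: H01_scale)
  have Js: "Jfun rp rm xi (\<lambda>x. cc * psc x) (\<lambda>x. cc * d1 x) = 1"
    unfolding Jfun_scale cc2 JJ_def[symmetric] using JJp by simp
  show ?thesis
  proof (intro exI conjI allI impI)
    show "0 < s0" by (rule s0p)
    fix s assume s: "0 < s \<and> s \<le> s0"
    have "s * V \<le> s0 * V" using s V0 by (intro mult_right_mono) auto
    then have "s * V + M < 0" using s0V by linarith
    then have "Efun g rp rm mp mm b xi s psc d1 d2 < 0" unfolding split by simp
    then have neg: "Efun g rp rm mp mm b xi s (\<lambda>x. cc * psc x) (\<lambda>x. cc * d1 x) (\<lambda>x. cc * d2 x) < 0"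
      unfolding Efun_scale using cc2p by (simp add: mult_pos_neg)
    have "alpha g rp rm mp mm b xi s \<le> ereal (Efun g rp rm mp mm b xi s (\<lambda>x. cc * psc x) (\<lambda>x. cc * d1 x) (\<lambda>x. cc * d2 x))"
      unfolding alpha_def by (rule Inf_lower) (use Hs Js in blast)
    also have "\<dots> < 0" using neg by simp
    finally show "alpha g rp rm mp mm b xi s < 0" .
  qed
qed


theorem lemma3p4:
  fixes g rp rm mp mm xi :: real and B :: "'a::real_normed_vector"
  assumes "g > 0" and "rp > rm" and "rm > 0" and "mp > 0" and "mm > 0"
    and "B \<noteq> 0" and "xi \<noteq> 0"
  shows "((ereal ((norm B)\<^sup>2) \<ge> Bc2 g rp rm
            \<or> (ereal ((norm B)\<^sup>2) < Bc2 g rp rm \<and> ereal (xi\<^sup>2) \<le> xivc2 g rp rm (norm B)))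
           \<longrightarrow> (\<forall>s\<ge>0. alpha g rp rm mp mm (norm B) xi s \<ge> 0))
       \<and> ((ereal ((norm B)\<^sup>2) < Bc2 g rp rm \<and> ereal (xi\<^sup>2) > xivc2 g rp rm (norm B))
           \<longrightarrow> (\<exists>s0>0. \<forall>s. 0 < s \<and> s \<le> s0 \<longrightarrow> alpha g rp rm mp mm (norm B) xi s < 0))"
proof (intro conjI impI allI)
  fix s :: real
  assume hyp: "ereal ((norm B)\<^sup>2) \<ge> Bc2 g rp rm
            \<or> (ereal ((norm B)\<^sup>2) < Bc2 g rp rm \<and> ereal (xi\<^sup>2) \<le> xivc2 g rp rm (norm B))"
    and s: "s \<ge> 0"
  show "alpha g rp rm mp mm (norm B) xi s \<ge> 0"
    unfolding alpha_def
  proof (rule Inf_greatest)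
    fix x assume "x \<in> {ereal (Efun g rp rm mp mm (norm B) xi s psi d1 d2) | psi d1 d2.
            H02 psi d1 d2 \<and> Jfun rp rm xi psi d1 = 1}"
    then obtain psi d1 d2 where x: "x = ereal (Efun g rp rm mp mm (norm B) xi s psi d1 d2)" and H: "H02 psi d1 d2"
      by blast
    have "0 \<le> Efun g rp rm mp mm (norm B) xi s psi d1 d2"
      by (rule part1[OF H s assms(1-5) hyp])
    then show "0 \<le> x" unfolding x by simp
  qed
next
  assume hyp: "ereal ((norm B)\<^sup>2) < Bc2 g rp rm \<and> ereal (xi\<^sup>2) > xivc2 g rp rm (norm B)"
  then have "xivc2 g rp rm (norm B) < ereal (xi\<^sup>2)" by simp
  then show "\<exists>s0>0. \<forall>s. 0 < s \<and> s \<le> s0 \<longrightarrow> alpha g rp rm mp mm (norm B) xi s < 0"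
    by (rule part2[OF assms(1-5)])
qed

end
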